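(* Let $u$ be implemented by a network of depth $\mathcal D$ and width $\mathcal W$ with activations in $\{\mathrm{ReLU}^2,\mathrm{ReLU}^3\}$ (respectively in $\{\mathrm{ReLU}^3\}$). Then for each $i=1,\dots,d$, the partial derivative $D_iu$ is implemented by a network of depth $\mathcal D+2$ and width at most $(\mathcal D+2)\mathcal W$ with activations in $\{\mathrm{ReLU},\mathrm{ReLU}^2,\mathrm{ReLU}^3\}$ (respectively in $\{\mathrm{ReLU}^2,\mathrm{ReLU}^3\}$). Moreover, the networks implementing $D_1u,\dots,D_du$ can be chosen with the same architecture.
   Context: $\mathrm{ReLU}^k(x)=(\max\{x,0\})^k$ for $k\ge1$. A function $u:\mathbb R^d\to\mathbb R$ is implemented by a network of depth $\mathcal D$ and width $\mathcal W$ with activations in $\Phi$ if there are $n_0=d,n_1,\dots,n_{\mathcal D}=1$ with $\max_\ell n_\ell\le\mathcal W$, $A_\ell\in\mathbb R^{n_\ell\times n_{\ell-1}}$, $b_\ell\in\mathbb R^{n_\ell}$, such that $f_0=x$, $(f_\ell)_q=\rho^{(\ell)}_q((A_\ell f_{\ell-1}+b_\ell)_q)$ for $\ell=1,\dots,\mathcal D-1$ with each $\rho^{(\ell)}_q\in\Phi$, and $u=A_{\mathcal D}f_{\mathcal D-1}+b_{\mathcal D}$. "Same architecture" means the same depth, layer sizes and assignment of activation functions to units (only the weights differ). *)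

theory Defs
  imports Complex_Main
begin

definition relu_pow :: "nat \<Rightarrow> real \<Rightarrow> real" where
  "relu_pow k x = (max x 0) ^ k"

text \<open>A network is given by layer sizes ns = [n_0,...,n_D], weights A l q j (layer l, row q, column j),
  biases b l q, and activation assignment act l q (exponent of ReLU used at unit q of layer l).
  Vectors are functions nat => real, only the first n_l entries being relevant.
  The input x : nat => real is a point of R^d via its first d coordinates.\<close>
fun net_layer :: "nat list \<Rightarrow> (nat \<Rightarrow> nat \<Rightarrow> nat \<Rightarrow> real) \<Rightarrow> (nat \<Rightarrow> nat \<Rightarrow> real)
    \<Rightarrow> (nat \<Rightarrow> nat \<Rightarrow> nat) \<Rightarrow> (nat \<Rightarrow> real) \<Rightarrow> nat \<Rightarrow> (nat \<Rightarrow> real)" where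
  "net_layer ns A b act x 0 = x"
| "net_layer ns A b act x (Suc l) =
     (\<lambda>q. relu_pow (act (Suc l) q)
            ((\<Sum>j<ns ! l. A (Suc l) q j * net_layer ns A b act x l j) + b (Suc l) q))"

definition net_out :: "nat list \<Rightarrow> (nat \<Rightarrow> nat \<Rightarrow> nat \<Rightarrow> real) \<Rightarrow> (nat \<Rightarrow> nat \<Rightarrow> real)
    \<Rightarrow> (nat \<Rightarrow> nat \<Rightarrow> nat) \<Rightarrow> (nat \<Rightarrow> real) \<Rightarrow> real" where
  "net_out ns A b act x =
     (let D = length ns - 1 in
       (\<Sum>j<ns ! (D - 1). A D 0 j * net_layer ns A b act x (D - 1) j) + b D 0)"

definition net_arch :: "nat list \<Rightarrow> (nat \<Rightarrow> nat \<Rightarrow> nat) \<Rightarrow> nat set \<Rightarrow> nat \<Rightarrow> nat \<Rightarrow> nat \<Rightarrow> bool" where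
  "net_arch ns act \<Phi> d D W \<longleftrightarrow>
     1 \<le> D \<and> length ns = D + 1 \<and> ns ! 0 = d \<and> ns ! D = 1 \<and>
     (\<forall>l\<le>D. ns ! l \<le> W) \<and>
     (\<forall>l. 1 \<le> l \<and> l < D \<longrightarrow> (\<forall>q < ns ! l. act l q \<in> \<Phi>))"

definition implements :: "nat set \<Rightarrow> nat \<Rightarrow> nat \<Rightarrow> nat \<Rightarrow> ((nat \<Rightarrow> real) \<Rightarrow> real) \<Rightarrow> bool" where
  "implements \<Phi> d D W u \<longleftrightarrow>
     (\<exists>ns A b act. net_arch ns act \<Phi> d D W \<and> (\<forall>x. u x = net_out ns A b act x))"

end

theory Submission
  imports Defs
begin

lemma relu_pow_deriv:
  assumes k: "2 \<le> k"
  shows "(relu_pow k has_real_derivative real k * relu_pow (k-1) y) (at y)"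
proof -
  consider "y > 0" | "y < 0" | "y = 0" by linarith
  then show ?thesis
  proof cases
    case 1
    have ev: "eventually (\<lambda>z. relu_pow k z = z ^ k) (nhds y)"
      using eventually_nhds_in_open[of "{0<..}" y] 1
      by (auto elim!: eventually_mono simp: relu_pow_def)
    have "((\<lambda>z. z ^ k) has_real_derivative real k * y ^ (k-1)) (at y)"
      using DERIV_power[OF DERIV_ident, of k y UNIV] by simp
    moreover have "relu_pow (k-1) y = y ^ (k-1)" using 1 by (simp add: relu_pow_def)
    ultimately show ?thesis
      using DERIV_cong_ev[OF refl ev refl] by simp
  next
    case 2
    have ev: "eventually (\<lambda>z. relu_pow k z = 0) (nhds y)"
      using eventually_nhds_in_open[of "{..<0}" y] 2 k
      by (auto elim!: eventually_mono simp: relu_pow_def)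
    moreover have "relu_pow (k-1) y = 0" using 2 k by (simp add: relu_pow_def)
    ultimately show ?thesis
      using DERIV_cong_ev[OF refl ev, of "0" "0"] DERIV_const[of "0::real" "at y"] by simp
  next
    case 3
    have r0: "relu_pow (k-1) 0 = 0" "relu_pow k 0 = 0" using k by (auto simp: relu_pow_def)
    have "(\<lambda>h. (relu_pow k (0 + h) - relu_pow k 0) / h) \<midarrow>0\<rightarrow> 0"
    proof (rule tendsto_0_le[where K=1 and f="\<lambda>h::real. \<bar>h\<bar> ^ (k-1)"])
      show "\<forall>\<^sub>F h in at 0. norm ((relu_pow k (0 + h) - relu_pow k 0) / h) \<le> norm (\<bar>h\<bar> ^ (k-1)) * 1"
      proof (rule always_eventually, rule allI)
        fix h :: real
        obtain m where km: "k = Suc (Suc m)" using k by (metis add_2_eq_Suc le_Suc_ex)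
        show "norm ((relu_pow k (0 + h) - relu_pow k 0) / h) \<le> norm (\<bar>h\<bar> ^ (k-1)) * 1"
        proof (cases "h > 0")
          case True
          then have "(relu_pow k (0 + h) - relu_pow k 0) / h = h ^ (k-1)"
            using True by (simp add: km relu_pow_def)
          then show ?thesis using True by simp
        next
          case False
          then show ?thesis using r0 k by (simp add: relu_pow_def max_def)
        qed
      qed
      show "(\<lambda>h::real. \<bar>h\<bar> ^ (k-1)) \<midarrow>0\<rightarrow> 0"
        using k by (auto intro!: tendsto_eq_intros)
    qed
    then show ?thesis using 3 r0 by (simp add: DERIV_def)
  qed
qed

datatype ukind = UF nat | US nat | UQ nat nat | UE nat | UX

locale onet =
  fixes ns :: "nat list" and A :: "nat \<Rightarrow> nat \<Rightarrow> nat \<Rightarrow> real" and b :: "nat \<Rightarrow> nat \<Rightarrow> real"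
    and act :: "nat \<Rightarrow> nat \<Rightarrow> nat" and D :: nat
  assumes D1: "1 \<le> D" and lenns: "length ns = D + 1" and nD: "ns ! D = 1"
    and act23: "\<And>l q. 1 \<le> l \<Longrightarrow> l < D \<Longrightarrow> q < ns ! l \<Longrightarrow> 2 \<le> act l q \<and> act l q \<le> 3"
begin

definition Fo :: "(nat \<Rightarrow> real) \<Rightarrow> nat \<Rightarrow> nat \<Rightarrow> real" where
  "Fo x l = net_layer ns A b act x l"

definition Zo :: "nat \<Rightarrow> nat \<Rightarrow> (nat \<Rightarrow> real) \<Rightarrow> real" where
  "Zo l q x = (\<Sum>j<ns ! (l-1). A l q j * Fo x (l-1) j) + b l q"

lemma Fo_0: "Fo x 0 = x" by (simp add: Fo_def)
lemma Fo_Suc: "Fo x (Suc l) q = relu_pow (act (Suc l) q) (Zo (Suc l) q x)"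
  by (simp add: Fo_def Zo_def)

primrec Go :: "nat \<Rightarrow> nat \<Rightarrow> nat \<Rightarrow> (nat \<Rightarrow> real) \<Rightarrow> real" where
  "Go i 0 q x = (if q = i then 1 else 0)"
| "Go i (Suc l) q x = real (act (Suc l) q) * relu_pow (act (Suc l) q - 1) (Zo (Suc l) q x)
      * (\<Sum>j<ns ! l. A (Suc l) q j * Go i l j x)"

lemma Fo_deriv:
  "l < D \<Longrightarrow> (l = 0 \<or> q < ns ! l) \<Longrightarrow>
    ((\<lambda>t. Fo (x(i := t)) l q) has_real_derivative Go i l q x) (at (x i))"
proof (induction l arbitrary: q)
  case 0
  show ?case
  proof (cases "q = i")
    case True then show ?thesis by (simp add: Fo_0)
  next
    case False then show ?thesis by (simp add: Fo_0)
  qed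
next
  case (Suc l)
  have k: "2 \<le> act (Suc l) q" using act23[of "Suc l" q] Suc.prems by auto
  have dz: "((\<lambda>t. Zo (Suc l) q (x(i := t))) has_real_derivative
      (\<Sum>j<ns ! l. A (Suc l) q j * Go i l j x)) (at (x i))"
    unfolding Zo_def using Suc.prems
    by (auto intro!: derivative_eq_intros Suc.IH simp: mult.commute)
  have "((\<lambda>t. relu_pow (act (Suc l) q) (Zo (Suc l) q (x(i := t)))) has_real_derivative
     (real (act (Suc l) q) * relu_pow (act (Suc l) q - 1) (Zo (Suc l) q (x(i := x i))))
      * (\<Sum>j<ns ! l. A (Suc l) q j * Go i l j x)) (at (x i))"
    by (rule DERIV_chain2[OF relu_pow_deriv[OF k] dz])
  then show ?case by (simp only: Fo_Suc Go.simps fun_upd_triv)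
qed

definition DIU :: "nat \<Rightarrow> (nat \<Rightarrow> real) \<Rightarrow> real" where
  "DIU i x = (\<Sum>j<ns ! (D-1). A D 0 j * Go i (D-1) j x)"

lemma out_deriv:
  "((\<lambda>t. net_out ns A b act (x(i := t))) has_real_derivative DIU i x) (at (x i))"
proof -
  have e: "net_out ns A b act y = (\<Sum>j<ns ! (D-1). A D 0 j * Fo y (D-1) j) + b D 0" for y
    by (simp add: net_out_def lenns Fo_def)
  show ?thesis unfolding e DIU_def using D1
    by (auto intro!: derivative_eq_intros Fo_deriv simp: mult.commute)
qed


definition nF :: "nat \<Rightarrow> nat" where
  "nF m = (if m = 0 then ns ! 0 else if m + 2 \<le> D then ns ! m else 0)"
definition nS :: "nat \<Rightarrow> nat" where
  "nS m = (if 1 \<le> m \<and> m + 1 \<le> D then ns ! m else 0)"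
definition nQ :: "nat \<Rightarrow> nat" where
  "nQ m = (if 2 \<le> m \<and> m \<le> D then 4 * ns ! (m-1) else 0)"
definition nE :: "nat \<Rightarrow> nat" where
  "nE m = (if m = D + 1 \<and> 2 \<le> D then 4 else 0)"
definition NN :: "nat \<Rightarrow> nat" where
  "NN m = (if m = D + 2 then 1 else nF m + nS m + nQ m + nE m)"

definition dec :: "nat \<Rightarrow> nat \<Rightarrow> ukind" where
  "dec m p = (if p < nF m then UF p else if p < nF m + nS m then US (p - nF m)
     else if p < nF m + nS m + nQ m then
       UQ ((p - (nF m + nS m)) mod ns ! (m-1)) ((p - (nF m + nS m)) div ns ! (m-1))
     else if p < nF m + nS m + nQ m + nE m then UE (p - (nF m + nS m + nQ m)) else UX)"

definition pos :: "nat \<Rightarrow> ukind \<Rightarrow> nat" where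
  "pos m k = (case k of UF j \<Rightarrow> j | US j \<Rightarrow> nF m + j
     | UQ j r \<Rightarrow> nF m + nS m + r * ns ! (m-1) + j | UE r \<Rightarrow> nF m + nS m + nQ m + r | UX \<Rightarrow> 0)"

definition valid :: "nat \<Rightarrow> ukind \<Rightarrow> bool" where
  "valid m k = (case k of UF j \<Rightarrow> j < nF m | US j \<Rightarrow> j < nS m
     | UQ j r \<Rightarrow> nQ m \<noteq> 0 \<and> j < ns ! (m-1) \<and> r < 4 | UE r \<Rightarrow> r < nE m | UX \<Rightarrow> False)"

lemma pos_dec: "valid m k \<Longrightarrow> dec m (pos m k) = k \<and> pos m k < nF m + nS m + nQ m + nE m"
proof (cases k)
  case (UQ j r)
  assume v: "valid m k"
  then have nq: "nQ m = 4 * ns ! (m-1)" and j: "j < ns ! (m-1)" and r: "r < 4"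
    using UQ by (auto simp: valid_def nQ_def split: if_splits)
  have "r * ns ! (m-1) + j < 4 * ns ! (m-1)"
  proof -
    have "r * ns ! (m-1) + j < (r+1) * ns ! (m-1)" using j by simp
    also have "\<dots> \<le> 4 * ns ! (m-1)" using r by (intro mult_le_mono1) simp
    finally show ?thesis .
  qed
  moreover have "(r * ns ! (m-1) + j) mod ns ! (m-1) = j" "(r * ns ! (m-1) + j) div ns ! (m-1) = r"
    using j by auto
  ultimately show ?thesis using UQ nq by (simp add: dec_def pos_def)
qed (auto simp: valid_def dec_def pos_def)

lemma dec_valid: "p < nF m + nS m + nQ m + nE m \<Longrightarrow> valid m (dec m p)"
proof -
  assume p: "p < nF m + nS m + nQ m + nE m"
  show ?thesis
  proof (cases "nF m + nS m \<le> p \<and> p < nF m + nS m + nQ m")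
    case True
    then have nq: "nQ m = 4 * ns ! (m-1)" "nQ m \<noteq> 0" by (auto simp: nQ_def split: if_splits)
    then have pos: "0 < ns ! (m-1)" by simp
    have lt: "p - (nF m + nS m) < 4 * ns ! (m-1)" using True nq by linarith
    have "(p - (nF m + nS m)) div ns ! (m-1) < 4"
      using lt pos by (simp add: div_less_iff_less_mult)
    then show ?thesis using True nq pos by (auto simp: dec_def valid_def)
  next
    case False
    then show ?thesis using p by (auto simp: dec_def valid_def)
  qed
qed

definition sg1 :: "nat \<Rightarrow> real" where "sg1 r = (if even r then 1 else -1)"
definition sg2 :: "nat \<Rightarrow> real" where "sg2 r = (if r < 2 then 1 else -1)"

definition Vt :: "nat \<Rightarrow> nat \<Rightarrow> ukind \<Rightarrow> (nat \<Rightarrow> real) \<Rightarrow> real" where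
  "Vt i m k x = (case k of UF j \<Rightarrow> Fo x m j
     | US j \<Rightarrow> relu_pow (act m j - 1) (Zo m j x)
     | UQ j r \<Rightarrow> relu_pow 2 (sg1 r * (real (act (m-1) j) * relu_pow (act (m-1) j - 1) (Zo (m-1) j x)
                 + sg2 r * (\<Sum>j'<ns ! (m-2). A (m-1) j j' * Go i (m-2) j' x)))
     | UE r \<Rightarrow> relu_pow 2 (sg1 r * (DIU i x + sg2 r))
     | UX \<Rightarrow> 0)"

definition dl :: "nat \<Rightarrow> nat \<Rightarrow> real" where "dl P p = (if p = P then 1 else 0)"
definition ev :: "nat \<Rightarrow> (nat \<Rightarrow> real) \<Rightarrow> (nat \<Rightarrow> real) \<Rightarrow> real" where
  "ev N c V = (\<Sum>p<N. c p * V p)"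

lemma ev_add[simp]: "ev N (\<lambda>p. f p + g p) V = ev N f V + ev N g V"
  by (simp add: ev_def algebra_simps sum.distrib)
lemma ev_diff[simp]: "ev N (\<lambda>p. f p - g p) V = ev N f V - ev N g V"
  by (simp add: ev_def algebra_simps sum_subtractf)
lemma ev_cmult[simp]: "ev N (\<lambda>p. c * f p) V = c * ev N f V"
  by (simp add: ev_def sum_distrib_left mult.assoc)
lemma ev_div[simp]: "ev N (\<lambda>p. f p / c) V = ev N f V / c"
  by (simp add: ev_def sum_divide_distrib)
lemma ev_sum[simp]: "ev N (\<lambda>p. \<Sum>j\<in>S. f j p) V = (\<Sum>j\<in>S. ev N (f j) V)"
  by (simp add: ev_def sum_distrib_right sum.swap[of _ S])
lemma ev_zero[simp]: "ev N (\<lambda>p. 0) V = 0"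
  by (simp add: ev_def)
lemma ev_dl: "P < N \<Longrightarrow> ev N (dl P) V = V P"
proof -
  assume P: "P < N"
  have "(\<Sum>p<N. dl P p * V p) = (\<Sum>p<N. if p = P then V p else 0)"
    by (rule sum.cong) (auto simp: dl_def)
  then show ?thesis using P by (simp add: ev_def)
qed


lemma V_pos: "valid m k \<Longrightarrow> m \<noteq> D + 2 \<Longrightarrow>
    ev (NN m) (dl (pos m k)) (\<lambda>p. Vt i m (dec m p) x) = Vt i m k x"
  using pos_dec[of m k] by (simp add: ev_dl NN_def)

lemma sq_sum: "relu_pow 2 w + relu_pow 2 (-w) = w\<^sup>2"
  by (simp add: relu_pow_def max_def power2_eq_square)

definition gform :: "nat \<Rightarrow> nat \<Rightarrow> nat \<Rightarrow> (nat \<Rightarrow> real) \<times> real" where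
  "gform i g j = (if g = 0 then ((\<lambda>_. 0), if j = i then 1 else 0)
     else ((\<lambda>p. (dl (pos (Suc g) (UQ j 0)) p + dl (pos (Suc g) (UQ j 1)) p
                 - dl (pos (Suc g) (UQ j 2)) p - dl (pos (Suc g) (UQ j 3)) p) / 4), 0))"

lemma gform_val:
  assumes "Suc g \<le> D" "g = 0 \<or> j < ns ! g"
  shows "ev (NN (Suc g)) (fst (gform i g j)) (\<lambda>p. Vt i (Suc g) (dec (Suc g) p) x) + snd (gform i g j)
     = Go i g j x"
proof (cases g)
  case 0
  then show ?thesis by (simp add: gform_def)
next
  case (Suc g')
  have g0: "g \<noteq> 0" using Suc by simp
  have j: "j < ns ! g" using assms Suc by auto
  have v: "valid (Suc g) (UQ j r)" if "r < 4" for r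
    using assms Suc j that by (auto simp: valid_def nQ_def)
  have nd: "Suc g \<noteq> D + 2" using assms by simp
  define base where "base = real (act g j) * relu_pow (act g j - 1) (Zo g j x)"
  define H where "H = (\<Sum>j'<ns ! g'. A g j j' * Go i g' j' x)"
  have Vq: "Vt i (Suc g) (UQ j r) x = relu_pow 2 (sg1 r * (base + sg2 r * H))" for r
    by (simp add: Vt_def base_def H_def Suc)
  have "ev (NN (Suc g)) (fst (gform i g j)) (\<lambda>p. Vt i (Suc g) (dec (Suc g) p) x)
     = (Vt i (Suc g) (UQ j 0) x + Vt i (Suc g) (UQ j 1) x - Vt i (Suc g) (UQ j 2) x - Vt i (Suc g) (UQ j 3) x) / 4"
  proof -
    have e: "ev (NN (Suc g)) (dl (pos (Suc g) (UQ j r))) (\<lambda>p. Vt i (Suc g) (dec (Suc g) p) x)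
       = Vt i (Suc g) (UQ j r) x" if "r < 4" for r
      by (rule V_pos[OF v[OF that] nd])
    have e0: "ev (NN (Suc g)) (dl (pos (Suc g) (UQ j 0))) (\<lambda>p. Vt i (Suc g) (dec (Suc g) p) x)
       = Vt i (Suc g) (UQ j 0) x" by (rule e) simp
    have e1: "ev (NN (Suc g)) (dl (pos (Suc g) (UQ j 1))) (\<lambda>p. Vt i (Suc g) (dec (Suc g) p) x)
       = Vt i (Suc g) (UQ j 1) x" by (rule e) simp
    have e2: "ev (NN (Suc g)) (dl (pos (Suc g) (UQ j 2))) (\<lambda>p. Vt i (Suc g) (dec (Suc g) p) x)
       = Vt i (Suc g) (UQ j 2) x" by (rule e) simp
    have e3: "ev (NN (Suc g)) (dl (pos (Suc g) (UQ j 3))) (\<lambda>p. Vt i (Suc g) (dec (Suc g) p) x)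
       = Vt i (Suc g) (UQ j 3) x" by (rule e) simp
    show ?thesis
      by (simp only: gform_def g0 if_False fst_conv ev_div ev_add ev_diff e0 e1 e2 e3)
  qed
  also have "\<dots> = ((base + H)\<^sup>2 - (base - H)\<^sup>2) / 4"
    using sq_sum[of "base + H"] sq_sum[of "base - H"]
    by (simp add: Vq sg1_def sg2_def algebra_simps)
  also have "\<dots> = Go i g j x"
    by (simp add: Suc base_def H_def power2_eq_square algebra_simps)
  finally show ?thesis using g0 by (simp add: gform_def)
qed

definition form :: "nat \<Rightarrow> nat \<Rightarrow> ukind \<Rightarrow> (nat \<Rightarrow> real) \<times> real" where
  "form i m k = (case k of
     UF j \<Rightarrow> ((\<lambda>p. \<Sum>j'<ns ! (m-1). A m j j' * dl (pos (m-1) (UF j')) p), b m j)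
   | US j \<Rightarrow> ((\<lambda>p. \<Sum>j'<ns ! (m-1). A m j j' * dl (pos (m-1) (UF j')) p), b m j)
   | UQ j r \<Rightarrow> ((\<lambda>p. sg1 r * (real (act (m-1) j) * dl (pos (m-1) (US j)) p
          + sg2 r * (\<Sum>j'<ns ! (m-2). A (m-1) j j' * fst (gform i (m-2) j') p))),
        sg1 r * sg2 r * (\<Sum>j'<ns ! (m-2). A (m-1) j j' * snd (gform i (m-2) j')))
   | UE r \<Rightarrow> ((\<lambda>p. sg1 r * (\<Sum>j<ns ! (D-1). A D 0 j * fst (gform i (D-1) j) p)),
        sg1 r * ((\<Sum>j<ns ! (D-1). A D 0 j * snd (gform i (D-1) j)) + sg2 r))
   | UX \<Rightarrow> ((\<lambda>_. 0), 0))"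

definition actk :: "nat \<Rightarrow> ukind \<Rightarrow> nat" where
  "actk m k = (case k of UF j \<Rightarrow> act m j | US j \<Rightarrow> act m j - 1 | _ \<Rightarrow> 2)"

lemma step_val:
  assumes v: "valid (Suc m) k" and m: "m \<le> D"
  shows "relu_pow (actk (Suc m) k) (ev (NN m) (fst (form i (Suc m) k)) (\<lambda>p. Vt i m (dec m p) x)
      + snd (form i (Suc m) k)) = Vt i (Suc m) k x"
proof (cases k)
  case (UF j)
  have vv: "valid m (UF j')" if "j' < ns ! m" for j'
    using v UF that by (auto simp: valid_def nF_def split: if_splits)
  have nd: "m \<noteq> D + 2" using m by simp
  have "ev (NN m) (fst (form i (Suc m) k)) (\<lambda>p. Vt i m (dec m p) x)
      = (\<Sum>j'<ns ! m. A (Suc m) j j' * Fo x m j')"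
    using UF by (simp add: form_def V_pos[OF vv nd]) (simp add: Vt_def)
  then show ?thesis using UF by (simp add: form_def actk_def Vt_def Fo_Suc Zo_def)
next
  case (US j)
  have vv: "valid m (UF j')" if "j' < ns ! m" for j'
    using v US that by (auto simp: valid_def nF_def nS_def split: if_splits)
  have nd: "m \<noteq> D + 2" using m by simp
  have "ev (NN m) (fst (form i (Suc m) k)) (\<lambda>p. Vt i m (dec m p) x)
      = (\<Sum>j'<ns ! m. A (Suc m) j j' * Fo x m j')"
    using US by (simp add: form_def V_pos[OF vv nd]) (simp add: Vt_def)
  then show ?thesis using US by (simp add: form_def actk_def Vt_def Zo_def)
next
  case (UQ j r)
  have m1: "1 \<le> m" "m \<le> D - 1" and j: "j < ns ! m"
    using v UQ by (auto simp: valid_def nQ_def split: if_splits)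
  have vs: "valid m (US j)" using m1 j by (auto simp: valid_def nS_def)
  have nd: "m \<noteq> D + 2" using m by simp
  have g: "ev (NN m) (fst (gform i (m-1) j')) (\<lambda>p. Vt i m (dec m p) x) + snd (gform i (m-1) j')
     = Go i (m-1) j' x" if "j' < ns ! (m-1)" for j'
    using gform_val[of "m-1" j' i x] m1 that by (simp add: Suc_pred)
  define S where "S = relu_pow (act m j - 1) (Zo m j x)"
  define E where "E j' = ev (NN m) (fst (gform i (m-1) j')) (\<lambda>p. Vt i m (dec m p) x)" for j'
  define Sn where "Sn j' = snd (gform i (m-1) j')" for j'
  have "ev (NN m) (fst (form i (Suc m) k)) (\<lambda>p. Vt i m (dec m p) x) + snd (form i (Suc m) k)
     = sg1 r * (real (act m j) * S + sg2 r * (\<Sum>j'<ns ! (m-1). A m j j' * E j'))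
       + sg1 r * sg2 r * (\<Sum>j'<ns ! (m-1). A m j j' * Sn j')"
    using UQ by (simp add: form_def V_pos[OF vs nd] E_def Sn_def) (simp add: Vt_def S_def)
  also have "\<dots> = sg1 r * (real (act m j) * S + sg2 r * (\<Sum>j'<ns ! (m-1). A m j j' * (E j' + Sn j')))"
    by (simp add: algebra_simps sum.distrib sum_distrib_left)
  also have "\<dots> = sg1 r * (real (act m j) * S + sg2 r * (\<Sum>j'<ns ! (m-1). A m j j' * Go i (m-1) j' x))"
    using g by (simp add: E_def Sn_def)
  finally show ?thesis using UQ by (simp add: actk_def Vt_def S_def)
next
  case (UE r)
  have mD: "m = D" "2 \<le> D" using v UE by (auto simp: valid_def nE_def split: if_splits)
  have g: "ev (NN D) (fst (gform i (D-1) j')) (\<lambda>p. Vt i D (dec D p) x) + snd (gform i (D-1) j')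
     = Go i (D-1) j' x" if "j' < ns ! (D-1)" for j'
    using gform_val[of "D-1" j' i x] mD that by (simp add: Suc_pred)
  define E where "E j' = ev (NN D) (fst (gform i (D-1) j')) (\<lambda>p. Vt i D (dec D p) x)" for j'
  define Sn where "Sn j' = snd (gform i (D-1) j')" for j'
  have "ev (NN m) (fst (form i (Suc m) k)) (\<lambda>p. Vt i m (dec m p) x) + snd (form i (Suc m) k)
     = sg1 r * (\<Sum>j'<ns ! (D-1). A D 0 j' * E j') + sg1 r * ((\<Sum>j'<ns ! (D-1). A D 0 j' * Sn j') + sg2 r)"
    using UE mD by (simp add: form_def E_def Sn_def)
  also have "\<dots> = sg1 r * ((\<Sum>j'<ns ! (D-1). A D 0 j' * (E j' + Sn j')) + sg2 r)"
    by (simp add: algebra_simps sum.distrib sum_distrib_left)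
  also have "\<dots> = sg1 r * (DIU i x + sg2 r)"
    using g by (simp add: E_def Sn_def DIU_def)
  finally show ?thesis using UE by (simp add: actk_def Vt_def)
next
  case UX
  then show ?thesis using v by (simp add: valid_def)
qed


definition nsN :: "nat list" where "nsN = map NN [0..<D+3]"

definition outform :: "nat \<Rightarrow> (nat \<Rightarrow> real) \<times> real" where
  "outform i = (if 2 \<le> D then ((\<lambda>p. (dl (pos (D+1) (UE 0)) p + dl (pos (D+1) (UE 1)) p
        - dl (pos (D+1) (UE 2)) p - dl (pos (D+1) (UE 3)) p) / 4), 0)
     else ((\<lambda>_. 0), \<Sum>j<ns ! (D-1). A D 0 j * snd (gform i (D-1) j)))"

definition AN :: "nat \<Rightarrow> nat \<Rightarrow> nat \<Rightarrow> nat \<Rightarrow> real" where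
  "AN i m q = (if m = D + 2 then fst (outform i) else fst (form i m (dec m q)))"
definition bN :: "nat \<Rightarrow> nat \<Rightarrow> nat \<Rightarrow> real" where
  "bN i m q = (if m = D + 2 then snd (outform i) else snd (form i m (dec m q)))"
definition actN :: "nat \<Rightarrow> nat \<Rightarrow> nat" where
  "actN m q = actk m (dec m q)"

lemma nsN_nth: "m < D + 3 \<Longrightarrow> nsN ! m = NN m"
  by (simp add: nsN_def)

lemma layer_val:
  "m \<le> D + 1 \<Longrightarrow> p < NN m \<Longrightarrow> net_layer nsN (AN i) (bN i) actN x m p = Vt i m (dec m p) x"
proof (induction m arbitrary: p)
  case 0
  have "NN 0 = ns ! 0" by (simp add: NN_def nF_def nS_def nQ_def nE_def)
  then show ?case using 0 by (simp add: dec_def nF_def Vt_def Fo_0)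
next
  case (Suc m)
  have nd: "Suc m \<noteq> D + 2" using Suc.prems by simp
  have pl: "p < nF (Suc m) + nS (Suc m) + nQ (Suc m) + nE (Suc m)"
    using Suc.prems nd by (simp add: NN_def)
  have v: "valid (Suc m) (dec (Suc m) p)" by (rule dec_valid[OF pl])
  have "(\<Sum>j<nsN ! m. AN i (Suc m) p j * net_layer nsN (AN i) (bN i) actN x m j)
      = ev (NN m) (fst (form i (Suc m) (dec (Suc m) p))) (\<lambda>j. Vt i m (dec m j) x)"
    unfolding ev_def using Suc.prems nd
    by (intro sum.cong) (auto simp: nsN_nth AN_def Suc.IH)
  then have "net_layer nsN (AN i) (bN i) actN x (Suc m) p =
     relu_pow (actk (Suc m) (dec (Suc m) p)) (ev (NN m) (fst (form i (Suc m) (dec (Suc m) p)))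
       (\<lambda>j. Vt i m (dec m j) x) + snd (form i (Suc m) (dec (Suc m) p)))"
    using nd by (simp add: actN_def bN_def)
  also have "\<dots> = Vt i (Suc m) (dec (Suc m) p) x"
    using step_val[OF v] Suc.prems by simp
  finally show ?case .
qed

lemma out_val: "net_out nsN (AN i) (bN i) actN x = DIU i x"
proof -
  have len: "length nsN - 1 = D + 2" by (simp add: nsN_def)
  have "net_out nsN (AN i) (bN i) actN x
     = ev (NN (D+1)) (fst (outform i)) (\<lambda>j. Vt i (D+1) (dec (D+1) j) x) + snd (outform i)"
    unfolding net_out_def Let_def len ev_def
    by (auto simp: nsN_nth AN_def bN_def layer_val simp del: net_layer.simps intro!: sum.cong)
  also have "\<dots> = DIU i x"
  proof (cases "2 \<le> D")
    case True
    have v: "valid (D+1) (UE r)" if "r < 4" for r using True that by (simp add: valid_def nE_def)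
    have nd: "D + 1 \<noteq> D + 2" by simp
    have e: "ev (NN (D+1)) (dl (pos (D+1) (UE r))) (\<lambda>p. Vt i (D+1) (dec (D+1) p) x)
       = relu_pow 2 (sg1 r * (DIU i x + sg2 r))" if "r < 4" for r
      using V_pos[OF v[OF that] nd] by (simp add: Vt_def)
    have e0: "ev (NN (D+1)) (dl (pos (D+1) (UE 0))) (\<lambda>p. Vt i (D+1) (dec (D+1) p) x)
       = relu_pow 2 (DIU i x + 1)" using e[of 0] by (simp add: sg1_def sg2_def)
    have e1: "ev (NN (D+1)) (dl (pos (D+1) (UE 1))) (\<lambda>p. Vt i (D+1) (dec (D+1) p) x)
       = relu_pow 2 (- (DIU i x + 1))" using e[of 1] by (simp add: sg1_def sg2_def)
    have e2: "ev (NN (D+1)) (dl (pos (D+1) (UE 2))) (\<lambda>p. Vt i (D+1) (dec (D+1) p) x)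
       = relu_pow 2 (DIU i x - 1)" using e[of 2] by (simp add: sg1_def sg2_def)
    have e3: "ev (NN (D+1)) (dl (pos (D+1) (UE 3))) (\<lambda>p. Vt i (D+1) (dec (D+1) p) x)
       = relu_pow 2 (- (DIU i x - 1))" using e[of 3] by (simp add: sg1_def sg2_def)
    have "ev (NN (D+1)) (fst (outform i)) (\<lambda>j. Vt i (D+1) (dec (D+1) j) x) + snd (outform i)
       = (relu_pow 2 (DIU i x + 1) + relu_pow 2 (- (DIU i x + 1))
          - relu_pow 2 (DIU i x - 1) - relu_pow 2 (- (DIU i x - 1))) / 4"
      by (simp only: outform_def True if_True fst_conv snd_conv ev_div ev_add ev_diff e0 e1 e2 e3 add_0_right)
    also have "\<dots> = DIU i x"
      using sq_sum[of "DIU i x + 1"] sq_sum[of "DIU i x - 1"]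
      by (simp add: power2_eq_square algebra_simps)
    finally show ?thesis .
  next
    case False
    then have D: "D = 1" using D1 by simp
    have "NN (D+1) = 0" unfolding NN_def nF_def nS_def nQ_def nE_def using D by simp
    moreover have D0: "D - 1 = 0" using D by simp
    ultimately show ?thesis using False
      by (simp add: outform_def ev_def DIU_def gform_def)
  qed
  finally show ?thesis .
qed

lemma NN_bound:
  assumes W: "\<And>l. l \<le> D \<Longrightarrow> ns ! l \<le> W" and l: "l \<le> D + 2"
  shows "NN l \<le> (D + 2) * W"
proof -
  have W1: "1 \<le> W" using W[of D] nD by simp
  have c: "c * W \<le> (D + 2) * W" if "c \<le> D + 2" for c using that by (rule mult_le_mono1)
  consider "l = 0" | "l = D + 2" | "1 \<le> l" "l \<le> D + 1" using l by linarith
  then show ?thesis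
  proof cases
    case 1
    then show ?thesis using W[of 0] c[of 1] by (simp add: NN_def nF_def nS_def nQ_def nE_def)
  next
    case 2
    then show ?thesis using W1 c[of 1] by (simp add: NN_def)
  next
    case 3
    have a: "nF l \<le> W" "nS l \<le> W" using W 3 by (auto simp: nF_def nS_def)
    have q: "nQ l \<le> 4 * W" using W[of "l-1"] 3 by (auto simp: nQ_def)
    have e: "nE l \<le> 4 * W" using W1 by (simp add: nE_def)
    have nd: "l \<noteq> D + 2" using 3 by simp
    consider "l + 2 \<le> D" "2 \<le> l" | "l = 1" | "l = D - 1" "2 \<le> l" | "l = D" "2 \<le> l" | "l = D + 1" "2 \<le> D" | "l = D + 1" "D < 2"
      using 3 by linarith
    then show ?thesis
    proof cases
      case 1
      then have "NN l \<le> 6 * W" using a q by (simp add: NN_def nE_def)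
      moreover have "6 * W \<le> (D + 2) * W" using 1 by (intro c) simp
      ultimately show ?thesis by linarith
    next
      case 2
      then have "NN l \<le> 2 * W" using a by (simp add: NN_def nQ_def nE_def)
      moreover have "2 * W \<le> (D + 2) * W" by (intro c) simp
      ultimately show ?thesis by linarith
    next
      case 3
      then have "nF l = 0" "nE l = 0" by (auto simp: nF_def nE_def)
      then have "NN l \<le> 5 * W" using a q nd by (simp add: NN_def)
      moreover have "5 * W \<le> (D + 2) * W" using 3 by (intro c) simp
      ultimately show ?thesis by linarith
    next
      case 4
      then have "NN l \<le> 4 * W" using q by (simp add: NN_def nF_def nS_def nE_def)
      moreover have "4 * W \<le> (D + 2) * W" using 4 by (intro c) simp
      ultimately show ?thesis by linarith
    next
      case 5
      then have "NN l \<le> 4 * W" using e by (simp add: NN_def nF_def nS_def nQ_def)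
      moreover have "4 * W \<le> (D + 2) * W" using 5 by (intro c) simp
      ultimately show ?thesis by linarith
    next
      case 6
      then have "NN l = 0" by (simp add: NN_def nF_def nS_def nQ_def nE_def)
      then show ?thesis by simp
    qed
  qed
qed

lemma actN_cases:
  assumes "1 \<le> l" "l < D + 2" "q < NN l"
  shows "(\<exists>j. actN l q = act l j \<and> l < D \<and> j < ns ! l) \<or>
         (\<exists>j. actN l q = act l j - 1 \<and> l < D \<and> j < ns ! l) \<or> actN l q = 2"
proof -
  have pl: "q < nF l + nS l + nQ l + nE l" using assms by (simp add: NN_def)
  have v: "valid l (dec l q)" by (rule dec_valid[OF pl])
  show ?thesis
  proof (cases "dec l q")
    case (UF j)
    then show ?thesis using v assms by (auto simp: actN_def actk_def valid_def nF_def split: if_splits)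
  next
    case (US j)
    then show ?thesis using v assms by (auto simp: actN_def actk_def valid_def nS_def split: if_splits)
  qed (auto simp: actN_def actk_def)
qed

end


theorem mainTheorem11:
  fixes u :: "(nat \<Rightarrow> real) \<Rightarrow> real" and d D W :: nat and \<Phi> \<Psi> :: "nat set"
  assumes acts: "(\<Phi> = {2, 3} \<and> \<Psi> = {1, 2, 3}) \<or> (\<Phi> = {3} \<and> \<Psi> = {2, 3})"
    and impl: "implements \<Phi> d D W u"
  shows "\<exists>ns act. net_arch ns act \<Psi> d (D + 2) ((D + 2) * W) \<and>
           (\<forall>i<d. \<exists>A b. \<forall>x.
              ((\<lambda>t. u (x(i := t))) has_real_derivative net_out ns A b act x) (at (x i)))"
proof -
  obtain ns A b act where arch: "net_arch ns act \<Phi> d D W" and ueq: "\<And>x. u x = net_out ns A b act x"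
    using impl unfolding implements_def by blast
  have D1: "1 \<le> D" and len: "length ns = D + 1" and n0: "ns ! 0 = d" and nD: "ns ! D = 1"
    and Wb: "\<And>l. l \<le> D \<Longrightarrow> ns ! l \<le> W"
    and aP: "\<And>l q. 1 \<le> l \<Longrightarrow> l < D \<Longrightarrow> q < ns ! l \<Longrightarrow> act l q \<in> \<Phi>"
    using arch unfolding net_arch_def by auto
  have P23: "\<Phi> \<subseteq> {2, 3}" using acts by auto
  interpret O: onet ns A b act D
    using D1 len nD aP P23 by unfold_locales fastforce+
  have arch': "net_arch O.nsN O.actN \<Psi> d (D + 2) ((D + 2) * W)"
    unfolding net_arch_def
  proof (intro conjI allI impI)
    show "1 \<le> D + 2" by simp
    show "length O.nsN = D + 2 + 1" by (simp add: O.nsN_def)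
    show "O.nsN ! 0 = d" using n0 by (simp add: O.nsN_nth O.NN_def O.nF_def O.nS_def O.nQ_def O.nE_def)
    show "O.nsN ! (D + 2) = 1" by (simp add: O.nsN_nth O.NN_def)
    fix l assume "l \<le> D + 2"
    then show "O.nsN ! l \<le> (D + 2) * W" using O.NN_bound[OF Wb] by (simp add: O.nsN_nth)
  next
    fix l q assume l: "1 \<le> l \<and> l < D + 2" and q: "q < O.nsN ! l"
    then have q': "q < O.NN l" by (simp add: O.nsN_nth)
    from O.actN_cases[OF _ _ q'] l
    consider j where "O.actN l q = act l j" "l < D" "j < ns ! l"
      | j where "O.actN l q = act l j - 1" "l < D" "j < ns ! l" | "O.actN l q = 2" by blast
    then show "O.actN l q \<in> \<Psi>"
    proof cases
      case 1 then show ?thesis using aP[of l j] l acts by auto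
    next
      case 2 then show ?thesis using aP[of l j] l acts by auto
    next
      case 3 then show ?thesis using acts by auto
    qed
  qed
  show ?thesis
  proof (rule exI[of _ O.nsN], rule exI[of _ O.actN], intro conjI allI impI)
    show "net_arch O.nsN O.actN \<Psi> d (D + 2) ((D + 2) * W)" by (rule arch')
    fix i assume "i < d"
    show "\<exists>A' b'. \<forall>x. ((\<lambda>t. u (x(i := t))) has_real_derivative net_out O.nsN A' b' O.actN x) (at (x i))"
    proof (rule exI[of _ "O.AN i"], rule exI[of _ "O.bN i"], intro allI)
      fix x
      show "((\<lambda>t. u (x(i := t))) has_real_derivative net_out O.nsN (O.AN i) (O.bN i) O.actN x) (at (x i))"
        unfolding ueq O.out_val by (rule O.out_deriv)
    qed
  qed
qed

end
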